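(* Let $1\le r\le n$ and let $\mathcal{A}$ be a family of $r$-element subsets of $[n]$. Define $m:\mathcal{A}\to\mathbb{R}$ by: $m(A)=n/r$ if $A$ is contained in some matching of $\lfloor n/r\rfloor$ sets from $\mathcal{A}$, and otherwise $m(A)$ is the size of the largest matching of sets from $\mathcal{A}$ that contains $A$. Then \[ \sum_{A\in\mathcal{A}} \frac{1}{m(A)} \le \binom{n-1}{r-1}. \]
   Context: A matching is a collection of pairwise disjoint sets. $[n]=\{1,\dots,n\}$. *)

theory Defs
  imports Complex_Main "HOL-Library.Disjoint_Sets"
begin

definition matching_in :: "'a set set \<Rightarrow> 'a set set \<Rightarrow> bool" where
  "matching_in F M \<longleftrightarrow> M \<subseteq> F \<and> disjoint M"

definition mweight :: "nat \<Rightarrow> nat \<Rightarrow> nat set set \<Rightarrow> nat set \<Rightarrow> real" where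
  "mweight n r F A =
     (if \<exists>M. matching_in F M \<and> A \<in> M \<and> card M = n div r
      then real n / real r
      else real (Max {card M | M. matching_in F M \<and> A \<in> M}))"

end

theory Submission
  imports Defs "HOL-Combinatorics.Permutations"
begin

definition sepd :: "nat \<Rightarrow> nat \<Rightarrow> nat \<Rightarrow> nat \<Rightarrow> bool" where
  "sepd N r i j \<longleftrightarrow> i \<noteq> j \<and> r \<le> max i j - min i j \<and> r + (max i j - min i j) \<le> N"

definition sepset :: "nat \<Rightarrow> nat \<Rightarrow> nat set \<Rightarrow> bool" where
  "sepset N r T \<longleftrightarrow> (\<forall>i\<in>T. \<forall>j\<in>T. i \<noteq> j \<longrightarrow> sepd N r i j)"

lemma sepset_subset: "sepset N r T \<Longrightarrow> T' \<subseteq> T \<Longrightarrow> sepset N r T'"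
  unfolding sepset_def by blast

lemma prog_sep_aux:
  assumes "q * r \<le> N" "j < k" "k < q" "0 < r"
  shows "sepd N r (a + j * r) (a + k * r)"
proof -
  obtain t0 where "k = Suc (j + t0)" using less_imp_Suc_add[OF assms(2)] by blast
  then obtain t where t: "k = j + Suc t" by simp
  have e: "k * r = j * r + Suc t * r" using t by (simp add: algebra_simps)
  have "Suc t * r \<le> (q - 1) * r" using t assms by (intro mult_le_mono1) auto
  moreover have "r + (q - 1) * r = q * r" using assms by (cases q) auto
  moreover have "r \<le> Suc t * r" by simp
  moreover have "max (a + j * r) (a + k * r) - min (a + j * r) (a + k * r) = Suc t * r"
    using e by (simp add: max_def min_def)
  moreover have "a + j * r \<noteq> a + k * r" using e assms(4) by simp
  ultimately show ?thesis using assms(1) unfolding sepd_def by auto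
qed

lemma sepd_sym: "sepd N r i j \<Longrightarrow> sepd N r j i"
  unfolding sepd_def by (auto simp: max_def min_def)

lemma prog_sep:
  assumes "q * r \<le> N"
  shows "sepset N r ((\<lambda>j. a + j * r) ` {..<q})"
  unfolding sepset_def
proof (intro ballI impI)
  fix x y assume x: "x \<in> (\<lambda>j. a + j * r) ` {..<q}" and y: "y \<in> (\<lambda>j. a + j * r) ` {..<q}" and xy: "x \<noteq> y"
  obtain j where j: "j < q" "x = a + j * r" using x by auto
  obtain k where k: "k < q" "y = a + k * r" using y by auto
  have r0: "0 < r" using xy j k by (cases r) auto
  have "j \<noteq> k" using xy j k by auto
  then consider "j < k" | "k < j" by linarith
  then show "sepd N r x y"
  proof cases
    case 1 then show ?thesis using prog_sep_aux[OF assms 1 k(1) r0, of a] j k by simp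
  next
    case 2 then show ?thesis using prog_sep_aux[OF assms 2 j(1) r0, of a] j k sepd_sym by simp
  qed
qed

lemma prog_card:
  assumes "1 \<le> r" shows "card ((\<lambda>j. a + j * r) ` {..<q}) = q"
proof -
  have "inj_on (\<lambda>j. a + j * r) {..<q}" using assms by (auto simp: inj_on_def)
  then show ?thesis by (simp add: card_image)
qed

definition cl_hyp :: "nat \<Rightarrow> nat \<Rightarrow> nat set \<Rightarrow> (nat \<Rightarrow> real) \<Rightarrow> bool" where
  "cl_hyp N r S w \<longleftrightarrow> (\<forall>i\<in>S. \<forall>T\<subseteq>S. i \<in> T \<longrightarrow> sepset N r T \<longrightarrow>
      real (card T) \<le> w i \<and> (card T = N div r \<longrightarrow> real N / real r \<le> w i))"

lemma cl_base:
  assumes r: "1 \<le> r" and S: "S \<subseteq> {..<q*r}" and h: "cl_hyp (q*r) r S w"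
  shows "(\<Sum>i\<in>S. 1 / w i) \<le> real r"
proof -
  have fS: "finite S" using S finite_subset by blast
  have "(\<Sum>i\<in>S. 1 / w i) = (\<Sum>c\<in>{..<r}. \<Sum>i\<in>{i. i\<in>S \<and> i mod r = c}. 1 / w i)"
    using r by (intro sum.group[symmetric] fS) auto
  also have "\<dots> \<le> (\<Sum>c\<in>{..<r}. 1)"
  proof (rule sum_mono)
    fix c assume c: "c \<in> {..<r}"
    define K where "K = {i. i\<in>S \<and> i mod r = c}"
    have KP: "K \<subseteq> (\<lambda>j. c + j * r) ` {..<q}"
    proof
      fix i assume "i \<in> K"
      then have "i \<in> S" "i mod r = c" by (auto simp: K_def)
      then have "i = c + (i div r) * r" "i div r < q" using S r
        by (auto simp: less_mult_imp_div_less)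
      then show "i \<in> (\<lambda>j. c + j * r) ` {..<q}" by (intro image_eqI[of i _ "i div r"]) auto
    qed
    have sK: "sepset (q*r) r K" using prog_sep[of q r "q*r" c] KP sepset_subset by blast
    have fK: "finite K" using fS by (auto simp: K_def)
    have H: "\<And>i T. i \<in> S \<Longrightarrow> T \<subseteq> S \<Longrightarrow> i \<in> T \<Longrightarrow> sepset (q*r) r T \<Longrightarrow> real (card T) \<le> w i"
      using h unfolding cl_hyp_def by blast
    have KS: "K \<subseteq> S" by (auto simp: K_def)
    have wK: "\<forall>i\<in>K. real (card K) \<le> w i"
    proof
      fix i assume "i \<in> K"
      then show "real (card K) \<le> w i" using H[OF _ KS _ sK] KS by blast
    qed
    show "(\<Sum>i\<in>{i. i\<in>S \<and> i mod r = c}. 1 / w i) \<le> 1"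
    proof (cases "K = {}")
      case True then show ?thesis by (simp add: K_def[symmetric])
    next
      case False
      then have cp: "card K > 0" using fK by (simp add: card_gt_0_iff)
      have "(\<Sum>i\<in>K. 1 / w i) \<le> (\<Sum>i\<in>K. 1 / real (card K))"
        using wK cp by (intro sum_mono) (auto intro!: divide_left_mono)
      also have "\<dots> = 1" using cp by simp
      finally show ?thesis by (simp add: K_def)
    qed
  qed
  also have "\<dots> = real r" by simp
  finally show ?thesis .
qed

lemma cl_full:
  assumes r: "1 \<le> r" "r \<le> N" and h: "cl_hyp N r {..<N} w"
  shows "(\<Sum>i\<in>{..<N}. 1 / w i) \<le> real r"
proof -
  define q where "q = N div r"
  have qr: "q * r \<le> N" by (simp add: q_def)
  have q1: "q \<ge> 1" using r by (simp add: q_def div_greater_zero_iff Suc_le_eq)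
  have wi: "real N / real r \<le> w i" if i: "i < N" for i
  proof -
    define a where "a = (if i < q * r then i mod r else i - (q - 1) * r)"
    define T where "T = (\<lambda>j. a + j * r) ` {..<q}"
    have iT: "i \<in> T"
    proof (cases "i < q * r")
      case True
      then have "i div r < q" by (simp add: less_mult_imp_div_less)
      moreover have "i = i mod r + (i div r) * r" by simp
      ultimately show ?thesis using True unfolding T_def a_def by (auto intro!: image_eqI)
    next
      case False
      have "(q - 1) * r \<le> i" using False q1 by (metis diff_le_self mult_le_mono1 not_less order.trans)
      then have "i = a + (q - 1) * r" using False by (simp add: a_def)
      then show ?thesis unfolding T_def using q1 by (auto intro!: image_eqI)
    qed
    have Tl: "T \<subseteq> {..<N}"
    proof
      fix x assume "x \<in> T"
      then obtain j where j: "j < q" "x = a + j * r" by (auto simp: T_def)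
      have "j * r \<le> (q - 1) * r" using j by (intro mult_le_mono1) auto
      show "x \<in> {..<N}"
      proof (cases "i < q * r")
        case True
        have "i mod r < r" using r by simp
        moreover have "r + (q - 1) * r = q * r" using q1 by (cases q) auto
        ultimately have "a + (q - 1) * r < q * r" using True by (simp add: a_def)
        moreover have "a + j * r \<le> a + (q - 1) * r" using \<open>j * r \<le> (q - 1) * r\<close> by simp
        ultimately have "a + j * r < N" using qr by linarith
        then show ?thesis using j by simp
      next
        case False
        have "(q - 1) * r \<le> i" using False q1 by (metis diff_le_self mult_le_mono1 not_less order.trans)
        then have "a + (q - 1) * r = i" using False by (simp add: a_def)
        moreover have "a + j * r \<le> a + (q - 1) * r" using \<open>j * r \<le> (q - 1) * r\<close> by simp
        ultimately have "a + j * r < N" using i by linarith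
        then show ?thesis using j by simp
      qed
    qed
    have "sepset N r T" unfolding T_def using prog_sep qr by blast
    moreover have "card T = N div r" unfolding T_def using prog_card r q_def by simp
    moreover have "\<And>i T. i \<in> {..<N} \<Longrightarrow> T \<subseteq> {..<N} \<Longrightarrow> i \<in> T \<Longrightarrow> sepset N r T \<Longrightarrow>
        card T = N div r \<Longrightarrow> real N / real r \<le> w i"
      using h unfolding cl_hyp_def by blast
    ultimately show ?thesis using iT Tl i by blast
  qed
  have Np: "real N > 0" using r by simp
  have "(\<Sum>i\<in>{..<N}. 1 / w i) \<le> (\<Sum>i\<in>{..<N}. real r / real N)"
  proof (rule sum_mono)
    fix i assume "i \<in> {..<N}"
    then have "real N / real r \<le> w i" using wi by simp
    moreover have "real N / real r > 0" using r Np by simp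
    ultimately have "inverse (w i) \<le> inverse (real N / real r)" by (rule le_imp_inverse_le)
    then have "1 / w i \<le> 1 / (real N / real r)" by (simp add: inverse_eq_divide)
    then show "1 / w i \<le> real r / real N" by simp
  qed
  also have "\<dots> = real r" using Np by simp
  finally show ?thesis .
qed

lemma cl_step:
  assumes p: "p < Suc M" "p \<notin> S" and S: "S \<subseteq> {..<Suc M}" and h: "cl_hyp (Suc M) r S w"
    and qq: "M div r = Suc M div r"
    and IH: "\<And>S' w'. S' \<subseteq> {..<M} \<Longrightarrow> cl_hyp M r S' w' \<Longrightarrow> (\<Sum>i\<in>S'. 1 / w' i) \<le> real r"
  shows "(\<Sum>i\<in>S. 1 / w i) \<le> real r"
proof -
  define f where "f j = (if j < p then j else j - 1)" for j :: nat
  define g where "g k = (if k < p then k else Suc k)" for k :: nat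
  have gf: "g (f j) = j" if "j \<in> S" for j
  proof -
    have "j \<noteq> p" using that p by auto
    then show ?thesis by (auto simp: f_def g_def)
  qed
  have injf: "inj_on f S" by (metis gf inj_onI)
  have fS: "f ` S \<subseteq> {..<M}"
  proof
    fix x assume "x \<in> f ` S"
    then obtain j where "j \<in> S" "x = f j" by auto
    moreover have "j \<noteq> p" using \<open>j \<in> S\<close> p by auto
    ultimately show "x \<in> {..<M}" using S p by (auto simp: f_def)
  qed
  have gS: "g ` f ` S = S" using gf by (force simp: image_comp)
  have injg: "inj g" by (auto simp: inj_on_def g_def split: if_splits)
  have gsep: "sepd (Suc M) r (g x) (g y)" if "sepd M r x y" for x y
    using that unfolding sepd_def g_def by (auto simp: max_def min_def split: if_splits)
  have h': "cl_hyp M r (f ` S) (\<lambda>k. w (g k))"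
    unfolding cl_hyp_def
  proof (intro ballI allI impI)
    fix i T assume i: "i \<in> f ` S" and T: "T \<subseteq> f ` S" "i \<in> T" "sepset M r T"
    have T1: "g ` T \<subseteq> S" using T gS by blast
    have T2: "g i \<in> g ` T" using T by blast
    have T3: "sepset (Suc M) r (g ` T)" using T(3) gsep injg
      unfolding sepset_def by (auto simp: inj_eq)
    have cT: "card (g ` T) = card T" using injg by (simp add: card_image inj_on_subset)
    have gi: "g i \<in> S" using i gS by blast
    have H: "\<And>i T. i \<in> S \<Longrightarrow> T \<subseteq> S \<Longrightarrow> i \<in> T \<Longrightarrow> sepset (Suc M) r T \<Longrightarrow>
        real (card T) \<le> w i \<and> (card T = Suc M div r \<longrightarrow> real (Suc M) / real r \<le> w i)"
      using h unfolding cl_hyp_def by blast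
    have
      "real (card (g ` T)) \<le> w (g i) \<and> (card (g ` T) = Suc M div r \<longrightarrow> real (Suc M) / real r \<le> w (g i))"
      by (rule H[OF gi T1 T2 T3])
    moreover have "real M / real r \<le> real (Suc M) / real r" by (simp add: divide_right_mono)
    ultimately show "real (card T) \<le> w (g i) \<and> (card T = M div r \<longrightarrow> real M / real r \<le> w (g i))"
      using cT qq by auto
  qed
  have "(\<Sum>i\<in>S. 1 / w i) = (\<Sum>k\<in>f ` S. 1 / w (g k))"
    using injf by (simp add: sum.reindex gf)
  also have "\<dots> \<le> real r" using IH[OF fS h'] .
  finally show ?thesis .
qed

lemma cycle_lemma_aux:
  assumes r: "1 \<le> r" and q: "1 \<le> q"
  shows "d < r \<Longrightarrow> S \<subseteq> {..<q*r+d} \<Longrightarrow> cl_hyp (q*r+d) r S w \<Longrightarrow> (\<Sum>i\<in>S. 1 / w i) \<le> real r"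
proof (induction d arbitrary: S w)
  case 0
  then show ?case using cl_base[OF r] by simp
next
  case (Suc d)
  have dd: "(q * r + e) div r = q" if "e < r" for e
  proof -
    have "(e + q * r) div r = e div r + q" using r by simp
    then show ?thesis using that by (simp add: add.commute)
  qed
  have dv: "(q * r + d) div r = (q * r + Suc d) div r" using Suc.prems(1) dd[of d] dd[of "Suc d"] by simp
  have qrle: "r \<le> q * r + Suc d" using q by (metis le_add1 mult_le_mono1 mult_1 order_trans)
  show ?case
  proof (cases "S = {..<q*r+Suc d}")
    case True
    then show ?thesis using cl_full[OF r qrle] Suc.prems by simp
  next
    case False
    then obtain p where p: "p < q*r + Suc d" "p \<notin> S" using Suc.prems(2) by auto
    show ?thesis
      using cl_step[of p "q*r+d" S r w] p Suc.prems dv Suc.IH by simp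
  qed
qed

lemma cycle_lemma:
  assumes r: "1 \<le> r" "r \<le> N" and S: "S \<subseteq> {..<N}" and h: "cl_hyp N r S w"
  shows "(\<Sum>i\<in>S. 1 / w i) \<le> real r"
proof -
  have "N = (N div r) * r + N mod r" by simp
  moreover have "1 \<le> N div r" using r by (simp add: div_greater_zero_iff Suc_le_eq)
  moreover have "N mod r < r" using r by simp
  ultimately show ?thesis using cycle_lemma_aux[of r "N div r" "N mod r" S w] r S h by metis
qed

definition arc :: "nat \<Rightarrow> nat \<Rightarrow> nat \<Rightarrow> nat set" where
  "arc n r i = (\<lambda>t. (i + t) mod n + 1) ` {..<r}"

lemma arc_sub: "0 < n \<Longrightarrow> arc n r i \<subseteq> {1..n}"
  unfolding arc_def by (auto simp: Suc_le_eq)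

lemma mod_neq_aux: assumes "(a::nat) < b" "b < a + n" shows "a mod n \<noteq> b mod n"
proof
  assume "a mod n = b mod n"
  then have "b mod n = a mod n" by simp
  then have "n dvd b - a" using assms mod_eq_dvd_iff_nat[of a b n] by simp
  moreover have "0 < b - a" "b - a < n" using assms by auto
  ultimately show False by (meson nat_dvd_not_less)
qed

lemma arc_card: assumes "r \<le> n" shows "card (arc n r i) = r"
proof -
  have "inj_on (\<lambda>t. (i + t) mod n + 1) {..<r}"
  proof (rule inj_onI)
    fix t u assume tu: "t \<in> {..<r}" "u \<in> {..<r}" "(i + t) mod n + 1 = (i + u) mod n + 1"
    then have e: "(i + t) mod n = (i + u) mod n" by simp
    have "t < n" "u < n" using tu assms by auto
    show "t = u"
    proof (rule ccontr)
      assume "t \<noteq> u"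
      then consider "t < u" | "u < t" by linarith
      then show False
      proof cases
        case 1 then show False using mod_neq_aux[of "i+t" "i+u" n] e \<open>u < n\<close> by simp
      next
        case 2 then show False using mod_neq_aux[of "i+u" "i+t" n] e \<open>t < n\<close> by simp
      qed
    qed
  qed
  then show ?thesis unfolding arc_def by (simp add: card_image)
qed

lemma arc_disj_aux:
  assumes "i < j" "r \<le> j - i" "r + (j - i) \<le> n"
  shows "arc n r i \<inter> arc n r j = {}"
proof -
  have "(i + t) mod n \<noteq> (j + u) mod n" if "t < r" "u < r" for t u
    using assms that by (intro mod_neq_aux) auto
  then show ?thesis unfolding arc_def by auto
qed

lemma arc_disj: assumes "sepd n r i j" shows "arc n r i \<inter> arc n r j = {}"
proof (cases "i < j")
  case True then show ?thesis using assms arc_disj_aux[of i j r n] by (simp add: sepd_def max_def min_def)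
next
  case False
  then have "j < i" using assms by (simp add: sepd_def)
  then show ?thesis using assms arc_disj_aux[of j i r n] by (auto simp: sepd_def max_def min_def)
qed

lemma matching_card:
  assumes Fr: "\<forall>A\<in>F. A \<subseteq> {1..n} \<and> card A = r" and M: "matching_in F M"
  shows "card M * r \<le> n"
proof -
  have MF: "M \<subseteq> F" and dM: "disjoint M" using M by (auto simp: matching_in_def)
  have fin: "finite A" if "A \<in> M" for A using that MF Fr finite_subset by (meson finite_atLeastAtMost subsetD)
  have fM: "finite M" using MF Fr by (metis (no_types, lifting) Pow_iff finite_Pow_iff finite_atLeastAtMost finite_subset subsetI subsetD)
  have "card (\<Union>M) = sum card M" using dM fin by (intro card_Union_disjoint) (auto simp: disjoint_def)
  also have "\<dots> = card M * r" using MF Fr by (simp add: subsetD)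
  finally have "card (\<Union>M) = card M * r" .
  moreover have "\<Union>M \<subseteq> {1..n}" using MF Fr by blast
  then have "card (\<Union>M) \<le> n" using card_mono[of "{1..n}" "\<Union>M"] by simp
  ultimately show ?thesis by simp
qed

lemma mw_ge:
  assumes Fr: "\<forall>A\<in>F. A \<subseteq> {1..n} \<and> card A = r" and r: "1 \<le> r"
    and M: "matching_in F M" and AM: "A \<in> M"
  shows "real (card M) \<le> mweight n r F A \<and> (card M = n div r \<longrightarrow> mweight n r F A = real n / real r)"
proof (cases "\<exists>M. matching_in F M \<and> A \<in> M \<and> card M = n div r")
  case True
  have "card M * r \<le> n" using matching_card[OF Fr M] .
  then have "real (card M) * real r \<le> real n" by (metis of_nat_le_iff of_nat_mult)
  then have "real (card M) \<le> real n / real r" using r by (simp add: pos_le_divide_eq)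
  then show ?thesis using True by (simp add: mweight_def)
next
  case False
  have fF: "finite F" using Fr by (metis (no_types, lifting) Pow_iff finite_Pow_iff finite_atLeastAtMost finite_subset subsetI)
  have "{card M | M. matching_in F M \<and> A \<in> M} \<subseteq> card ` Pow F" by (auto simp: matching_in_def)
  then have fin: "finite {card M | M. matching_in F M \<and> A \<in> M}" using fF finite_subset by blast
  have "card M \<le> Max {card M | M. matching_in F M \<and> A \<in> M}" using M AM fin by (intro Max_ge) auto
  then show ?thesis using False M AM by (auto simp: mweight_def)
qed

lemma exists_perm:
  assumes U: "finite U" and X: "X \<subseteq> U" and Y: "Y \<subseteq> U" and c: "card X = card Y"
  shows "\<exists>\<sigma>. \<sigma> permutes U \<and> \<sigma> ` Y = X"
proof -
  obtain f where f: "bij_betw f Y X" using finite_same_card_bij[of Y X] U X Y c finite_subset by metis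
  have "card (U - Y) = card (U - X)" using U X Y c by (simp add: card_Diff_subset finite_subset)
  then obtain g where g: "bij_betw g (U - Y) (U - X)" using finite_same_card_bij[of "U - Y" "U - X"] U by auto
  define \<sigma> where "\<sigma> x = (if x \<in> Y then f x else if x \<in> U then g x else x)" for x
  have b1: "bij_betw \<sigma> Y X" using f by (rule bij_betw_cong[THEN iffD1, rotated]) (simp add: \<sigma>_def)
  have b2: "bij_betw \<sigma> (U - Y) (U - X)" using g by (rule bij_betw_cong[THEN iffD1, rotated]) (simp add: \<sigma>_def)
  have "bij_betw \<sigma> (Y \<union> (U - Y)) (X \<union> (U - X))" using bij_betw_combine[OF b1 b2] by blast
  moreover have "Y \<union> (U - Y) = U" "X \<union> (U - X) = U" using X Y by auto
  ultimately have "bij_betw \<sigma> U U" by simp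
  moreover have "\<sigma> x = x" if "x \<notin> U" for x using that Y by (auto simp: \<sigma>_def)
  ultimately have "\<sigma> permutes U" by (rule bij_imp_permutes)
  moreover have "\<sigma> ` Y = X" using b1 by (simp add: bij_betw_def)
  ultimately show ?thesis by blast
qed

lemma perm_sum_const:
  assumes U: "finite U" and X: "X \<subseteq> U" and Y: "Y \<subseteq> U" and c: "card X = card Y"
  shows "(\<Sum>p\<in>{p. p permutes U}. h (p ` X)) = (\<Sum>p\<in>{p. p permutes U}. h (p ` Y))"
proof -
  obtain \<sigma> where s: "\<sigma> permutes U" "\<sigma> ` Y = X" using exists_perm[OF U X Y c] by blast
  have "(\<Sum>p\<in>{p. p permutes U}. h (p ` Y)) = (\<Sum>p\<in>{p. p permutes U}. h ((p \<circ> \<sigma>) ` Y))"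
  proof (rule sum.reindex_bij_witness[of _ "\<lambda>p. p \<circ> \<sigma>" "\<lambda>p. p \<circ> inv \<sigma>"])
    fix p assume "p \<in> {p. p permutes U}"
    then have p: "p permutes U" by simp
    show "p \<circ> \<sigma> \<circ> inv \<sigma> = p" using permutes_inv_o(1)[OF s(1)] by (simp add: comp_assoc)
    show "p \<circ> \<sigma> \<in> {p. p permutes U}" using permutes_compose[OF s(1) p] by simp
    show "p \<circ> inv \<sigma> \<circ> \<sigma> = p" using permutes_inv_o(2)[OF s(1)] by (simp add: comp_assoc)
    show "p \<circ> inv \<sigma> \<in> {p. p permutes U}" using permutes_compose[OF permutes_inv[OF s(1)] p] by simp
    show "h ((p \<circ> inv \<sigma> \<circ> \<sigma>) ` Y) = h (p ` Y)" using permutes_inv_o(2)[OF s(1)] by (simp add: comp_assoc)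
  qed
  also have "\<dots> = (\<Sum>p\<in>{p. p permutes U}. h (p ` X))"
  proof -
    have "(p \<circ> \<sigma>) ` Y = p ` X" for p :: "'a \<Rightarrow> 'a" using s(2) by (metis image_comp)
    then show ?thesis by (simp only:)
  qed
  finally show ?thesis by simp
qed

lemma local_bound:
  assumes r: "1 \<le> r" "r \<le> n" and Fr: "\<forall>A\<in>F. A \<subseteq> {1..n} \<and> card A = r"
    and p: "p permutes {1..n}"
  shows "(\<Sum>i<n. (if p ` arc n r i \<in> F then 1 / mweight n r F (p ` arc n r i) else 0)) \<le> real r"
proof -
  define S where "S = {i\<in>{..<n}. p ` arc n r i \<in> F}"
  define w where "w i = mweight n r F (p ` arc n r i)" for i
  have injp: "inj p" using p by (rule permutes_inj)
  have "(\<Sum>i<n. (if p ` arc n r i \<in> F then 1 / mweight n r F (p ` arc n r i) else 0)) = (\<Sum>i\<in>S. 1 / w i)"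
    unfolding S_def w_def by (rule sum.inter_filter[symmetric]) simp
  also have "\<dots> \<le> real r"
  proof (rule cycle_lemma[OF r])
    show "S \<subseteq> {..<n}" by (auto simp: S_def)
    show "cl_hyp n r S w" unfolding cl_hyp_def
    proof (intro ballI allI impI)
      fix i T assume i: "i \<in> S" and T: "T \<subseteq> S" "i \<in> T" "sepset n r T"
      define M where "M = (\<lambda>j. p ` arc n r j) ` T"
      have ne: "arc n r j \<noteq> {}" for j using arc_card[of r n j] r by (metis card.empty not_one_le_zero)
      have dj: "p ` arc n r j \<inter> p ` arc n r k = {}" if "j \<in> T" "k \<in> T" "j \<noteq> k" for j k
      proof -
        have "sepd n r j k" using T(3) that by (auto simp: sepset_def)
        then have "arc n r j \<inter> arc n r k = {}" by (rule arc_disj)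
        then show ?thesis using injp by (simp add: image_Int[symmetric])
      qed
      have injT: "inj_on (\<lambda>j. p ` arc n r j) T"
      proof (rule inj_onI)
        fix j k assume "j \<in> T" "k \<in> T" "p ` arc n r j = p ` arc n r k"
        then show "j = k" using dj[of j k] ne[of j] by auto
      qed
      have MF: "M \<subseteq> F" using T(1) by (auto simp: M_def S_def)
      have dM: "disjoint M" unfolding disjoint_def pairwise_def disjnt_def M_def
        using dj by blast
      have mM: "matching_in F M" using MF dM by (simp add: matching_in_def)
      have AM: "p ` arc n r i \<in> M" using T(2) by (simp add: M_def)
      have cM: "card M = card T" unfolding M_def using injT by (simp add: card_image)
      show "real (card T) \<le> w i \<and> (card T = n div r \<longrightarrow> real n / real r \<le> w i)"
        using mw_ge[OF Fr r(1) mM AM] cM by (simp add: w_def)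
    qed
  qed
  finally show ?thesis .
qed

theorem theorem5:
  fixes n r :: nat and F :: "nat set set"
  assumes "1 \<le> r" "r \<le> n"
    and "\<forall>A\<in>F. A \<subseteq> {1..n} \<and> card A = r"
  shows "(\<Sum>A\<in>F. 1 / mweight n r F A) \<le> real ((n - 1) choose (r - 1))"
proof -
  note r = assms(1,2) and Fr = assms(3)
  define U where "U = {1..n}"
  define P where "P = {p. p permutes U}"
  define R where "R = {X. X \<subseteq> U \<and> card X = r}"
  define h where "h X = (if X \<in> F then 1 / mweight n r F X else 0)" for X
  define \<Phi> where "\<Phi> = (\<Sum>p\<in>P. h (p ` arc n r 0))"
  have n0: "0 < n" using r by simp
  have fU: "finite U" by (simp add: U_def)
  have fP: "finite P" unfolding P_def using fU by (rule finite_permutations)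
  have cP: "card P = fact n" unfolding P_def using card_permutations[of U n] fU by (simp add: U_def)
  have fR: "finite R" unfolding R_def using fU by (simp add: finite_subset)
  have cR: "card R = n choose r" unfolding R_def using n_subsets[OF fU, of r] by (simp add: U_def)
  have arcR: "arc n r i \<in> R" for i using arc_sub[OF n0] arc_card[OF r(2)] by (simp add: R_def U_def)
  have const: "(\<Sum>p\<in>P. h (p ` X)) = \<Phi>" if "X \<in> R" for X
    unfolding \<Phi>_def P_def using that arcR[of 0] fU
    by (intro perm_sum_const) (auto simp: R_def)
  have A: "(\<Sum>p\<in>P. \<Sum>i<n. h (p ` arc n r i)) \<le> (\<Sum>p\<in>P. real r)"
    by (intro sum_mono) (use local_bound[OF r Fr] in \<open>auto simp: P_def U_def h_def\<close>)
  have B: "(\<Sum>p\<in>P. \<Sum>i<n. h (p ` arc n r i)) = real n * \<Phi>"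
  proof -
    have "(\<Sum>p\<in>P. \<Sum>i<n. h (p ` arc n r i)) = (\<Sum>i<n. \<Sum>p\<in>P. h (p ` arc n r i))" by (rule sum.swap)
    also have "\<dots> = (\<Sum>i<n. \<Phi>)" using const arcR by simp
    finally show ?thesis by simp
  qed
  have C: "(\<Sum>X\<in>R. \<Sum>p\<in>P. h (p ` X)) = real (n choose r) * \<Phi>"
    using const cR by simp
  have D: "(\<Sum>X\<in>R. \<Sum>p\<in>P. h (p ` X)) = real (fact n) * (\<Sum>X\<in>R. h X)"
  proof -
    have "(\<Sum>X\<in>R. \<Sum>p\<in>P. h (p ` X)) = (\<Sum>p\<in>P. \<Sum>X\<in>R. h (p ` X))" by (rule sum.swap)
    also have "\<dots> = (\<Sum>p\<in>P. \<Sum>X\<in>R. h X)"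
    proof (rule sum.cong[OF refl])
      fix p assume "p \<in> P"
      then have p: "p permutes U" by (simp add: P_def)
      have injp: "inj p" using p by (rule permutes_inj)
      have inj: "inj_on ((`) p) R" using injp by (auto simp: inj_on_def inj_image_eq_iff)
      have sub: "(`) p ` R \<subseteq> R"
      proof
        fix Y assume "Y \<in> (`) p ` R"
        then obtain X where X: "X \<in> R" "Y = p ` X" by auto
        have "p ` X \<subseteq> U" using X permutes_image[OF p] by (auto simp: R_def)
        moreover have "card (p ` X) = r" using X injp by (simp add: R_def card_image inj_on_subset)
        ultimately show "Y \<in> R" using X by (simp add: R_def)
      qed
      have eq: "(`) p ` R = R" using endo_inj_surj[OF fR sub inj] .
      have "(\<Sum>X\<in>R. h (p ` X)) = (\<Sum>Y\<in>(`) p ` R. h Y)" using inj by (simp add: sum.reindex)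
      then show "(\<Sum>X\<in>R. h (p ` X)) = (\<Sum>X\<in>R. h X)" using eq by simp
    qed
    also have "\<dots> = real (fact n) * (\<Sum>X\<in>R. h X)" using cP by simp
    finally show ?thesis .
  qed
  have E: "(\<Sum>X\<in>R. h X) = (\<Sum>A\<in>F. 1 / mweight n r F A)"
  proof -
    have FR: "{X\<in>R. X \<in> F} = F" using Fr by (auto simp: R_def U_def)
    have "(\<Sum>X\<in>R. h X) = (\<Sum>X\<in>{X\<in>R. X \<in> F}. 1 / mweight n r F X)"
      unfolding h_def using fR by (rule sum.inter_filter[symmetric])
    then show ?thesis using FR by simp
  qed
  define \<Sigma> where "\<Sigma> = (\<Sum>A\<in>F. 1 / mweight n r F A)"
  have e1: "real (fact n) * \<Sigma> = real (n choose r) * \<Phi>" using C D E by (simp add: \<Sigma>_def)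
  have e2: "real n * \<Phi> \<le> real (fact n) * real r" using A B cP by simp
  have e3: "real r * real (n choose r) = real n * real ((n - 1) choose (r - 1))"
  proof -
    have "Suc (r - 1) * (n choose Suc (r - 1)) = n * ((n - 1) choose (r - 1))" by (rule binomial_absorption)
    then have "r * (n choose r) = n * ((n - 1) choose (r - 1))" using r by simp
    then show ?thesis by (metis of_nat_mult)
  qed
  have fpos: "real (fact n) > 0" by simp
  have "real n * (real (fact n) * \<Sigma>) = real (n choose r) * (real n * \<Phi>)" using e1 by (simp add: algebra_simps)
  also have "\<dots> \<le> real (n choose r) * (real (fact n) * real r)" using e2 by (intro mult_left_mono) auto
  also have "\<dots> = real (fact n) * (real n * real ((n - 1) choose (r - 1)))" using e3 by (simp add: algebra_simps)
  finally have "real (fact n) * (real n * \<Sigma>) \<le> real (fact n) * (real n * real ((n - 1) choose (r - 1)))"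
    by (simp add: algebra_simps)
  then have "real n * \<Sigma> \<le> real n * real ((n - 1) choose (r - 1))" using fpos by simp
  then show ?thesis using n0 by (simp add: \<Sigma>_def)
qed

end
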